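(* Let $\phi_1$ and $\phi_2$ be finite sets of clauses with $\phi_1\vdash_{UNIT}\phi_2$. Then there exist translations $\mathcal S_1$ of $\phi_1$ and $\mathcal S_2$ of $\phi_2$ to finite sets of Boolean constraints and literals, and a finite set $\mathcal C$ of Boolean constraints and literals, such that $\mathcal S_1\vdash^{\le 3}_{BOOL}\mathcal S_2\cup\mathcal C$ and $\mathcal C$ semantically follows from $\mathcal S_2$.
   Context: Boolean variables range over $\{0,1\}$. A Boolean constraint is a formal expression of one of the forms $x=y$, $\neg x=y$, $x\wedge y=z$, $x\vee y=z$ with $x,y,z$ distinct Boolean variables, interpreted in the expected way. A literal is a variable $x$ or its negation $\neg x$; $\bar u$ is the complement of $u$. A clause is a (possibly empty) disjunction of distinct literals; a unit clause has one literal; $u\vee Q$ denotes a clause containing literal $u$, with $Q$ the disjunction of the rest. Unit propagation $\phi_1\vdash_{UNIT}\phi_2$: $\phi_2$ is obtained from $\phi_1$ by one step of unit resolution (given unit clause $u$ and clause $\bar u\vee Q$ in the set, replace $\bar u\vee Q$ by $Q$) or unit subsumption (given unit clause $u$ and clause $u\vee Q$, delete $u\vee Q$). Translation of clauses: for a clause $Q$ and variable $z$ define $trans(Q=z)$ by induction on the number of literals of $Q$: if $Q$ is a unit clause, $trans(Q=z):=\{Q=z\}$ (an equality or NOT constraint); $trans(x\vee Q_1=z):=\{x\vee y=z\}\cup trans(Q_1=y)$ with $y$ fresh; $trans(\neg x\vee Q_1=z):=\{\neg x=v,\ v\vee y=z\}\cup trans(Q_1=y)$ with $v,y$ fresh.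 For a unit clause $u$, $trans(u):=\{u\}$; for a non-unit clause $Q$, $trans(Q):=\{z\}\cup trans(Q=z)$ with $z$ fresh. A translation of a finite set of clauses $\phi$ is obtained by translating each clause separately (with fresh variables distinct across clauses); it depends on the order of literals chosen and the fresh variables. The proof system BOOL consists of the following rules (constraint, premise $\rightarrow$ conclusion; $x,y,z$ schematic, instantiable by any distinct variables): EQU1: $x=y$, $x=1\rightarrow y=1$; EQU2: $x=y$, $y=1\rightarrow x=1$; EQU3: $x=y$, $x=0\rightarrow y=0$; EQU4: $x=y$, $y=0\rightarrow x=0$; NOT1: $\neg x=y$, $x=1\rightarrow y=0$; NOT2: $\neg x=y$, $x=0\rightarrow y=1$; NOT3: $\neg x=y$, $y=1\rightarrow x=0$; NOT4: $\neg x=y$, $y=0\rightarrow x=1$; AND1: $x\wedge y=z$, $x=1,y=1\rightarrow z=1$; AND2: $x\wedge y=z$, $x=1,z=0\rightarrow y=0$; AND3: $x\wedge y=z$, $y=1,z=0\rightarrow x=0$; AND4: $x\wedge y=z$, $x=0\rightarrow z=0$; AND5: $x\wedge y=z$, $y=0\rightarrow z=0$; AND6: $x\wedge y=z$, $z=1\rightarrow x=1,y=1$; OR1: $x\vee y=z$, $x=1\rightarrow z=1$; OR2: $x\vee y=z$, $x=0,y=0\rightarrow z=0$; OR3: $x\vee y=z$, $x=0,z=1\rightarrow y=1$; OR4: $x\vee y=z$, $y=0,z=1\rightarrow x=1$; OR5: $x\vee y=z$, $y=1\rightarrow z=1$; OR6: $x\vee y=z$, $z=0\rightarrow x=0,y=0$.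 Identify $v=1$ with the literal $v$ and $v=0$ with $\neg v$. A rule with constraint $c$, premise literals $P$, conclusion literals $K$ applies to a finite set $\mathcal S$ of Boolean constraints and literals if $c\in\mathcal S$ and $P\subseteq\mathcal S$; the result is $(\mathcal S\setminus\{c\})\cup K$. $\mathcal S_1\vdash^{\le i}_{BOOL}\mathcal S_2$ means $\mathcal S_2$ is obtained from $\mathcal S_1$ by at most $i$ such applications. A set $\mathcal C$ of Boolean constraints and literals semantically follows from a set $\mathcal S$ if every assignment of $0/1$ values satisfying $\mathcal S$ can be extended (on the variables of $\mathcal C$ not occurring in $\mathcal S$) to an assignment satisfying $\mathcal C$. *)

theory Defs
  imports Main
begin

datatype 'v lit = Pos 'v | Neg 'v

fun var :: "'v lit \<Rightarrow> 'v" where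
  "var (Pos x) = x" | "var (Neg x) = x"

fun comp :: "'v lit \<Rightarrow> 'v lit" where
  "comp (Pos x) = Neg x" | "comp (Neg x) = Pos x"

type_synonym 'v clause = "'v lit set"

definition vars :: "'v clause set \<Rightarrow> 'v set" where
  "vars \<phi> = (\<Union>C\<in>\<phi>. var ` C)"

definition unit_step :: "'v clause set \<Rightarrow> 'v clause set \<Rightarrow> bool" where
  "unit_step \<phi>1 \<phi>2 \<longleftrightarrow>
     (\<exists>u C. {u} \<in> \<phi>1 \<and> C \<in> \<phi>1 \<and> comp u \<in> C \<and> \<phi>2 = (\<phi>1 - {C}) \<union> {C - {comp u}})
   \<or> (\<exists>u C. {u} \<in> \<phi>1 \<and> C \<in> \<phi>1 \<and> u \<in> C \<and> C \<noteq> {u} \<and> \<phi>2 = \<phi>1 - {C})"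

datatype 'v bcon = EqC 'v 'v | NotC 'v 'v | AndC 'v 'v 'v | OrC 'v 'v 'v

text \<open>Elements of constraint sets: Boolean constraints or literals (Pos v is v=1, Neg v is v=0).\<close>
datatype 'v item = Con "'v bcon" | Lit "'v lit"

fun lit_val :: "('v \<Rightarrow> bool) \<Rightarrow> 'v lit \<Rightarrow> bool" where
  "lit_val \<sigma> (Pos x) = \<sigma> x" | "lit_val \<sigma> (Neg x) = (\<not> \<sigma> x)"

fun item_val :: "('v \<Rightarrow> bool) \<Rightarrow> 'v item \<Rightarrow> bool" where
  "item_val \<sigma> (Con (EqC x y)) = (\<sigma> x = \<sigma> y)"
| "item_val \<sigma> (Con (NotC x y)) = ((\<not> \<sigma> x) = \<sigma> y)"
| "item_val \<sigma> (Con (AndC x y z)) = ((\<sigma> x \<and> \<sigma> y) = \<sigma> z)"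
| "item_val \<sigma> (Con (OrC x y z)) = ((\<sigma> x \<or> \<sigma> y) = \<sigma> z)"
| "item_val \<sigma> (Lit l) = lit_val \<sigma> l"

fun bvars :: "'v bcon \<Rightarrow> 'v set" where
  "bvars (EqC x y) = {x, y}" | "bvars (NotC x y) = {x, y}"
| "bvars (AndC x y z) = {x, y, z}" | "bvars (OrC x y z) = {x, y, z}"

fun item_vars :: "'v item \<Rightarrow> 'v set" where
  "item_vars (Con c) = bvars c" | "item_vars (Lit l) = {var l}"

definition ivars :: "'v item set \<Rightarrow> 'v set" where
  "ivars S = (\<Union>i\<in>S. item_vars i)"

definition sat :: "('v \<Rightarrow> bool) \<Rightarrow> 'v item set \<Rightarrow> bool" where
  "sat \<sigma> S \<longleftrightarrow> (\<forall>i\<in>S. item_val \<sigma> i)"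

definition sem_follows :: "'v item set \<Rightarrow> 'v item set \<Rightarrow> bool" where
  "sem_follows S C \<longleftrightarrow>
     (\<forall>\<sigma>. sat \<sigma> S \<longrightarrow> (\<exists>\<tau>. (\<forall>x\<in>ivars S. \<tau> x = \<sigma> x) \<and> sat \<tau> C))"

text \<open>bool_rule c P K: rule with constraint c, premise literals P, conclusion literals K.\<close>
inductive bool_rule :: "'v bcon \<Rightarrow> 'v lit set \<Rightarrow> 'v lit set \<Rightarrow> bool" where
  EQU1: "bool_rule (EqC x y) {Pos x} {Pos y}"
| EQU2: "bool_rule (EqC x y) {Pos y} {Pos x}"
| EQU3: "bool_rule (EqC x y) {Neg x} {Neg y}"
| EQU4: "bool_rule (EqC x y) {Neg y} {Neg x}"
| NOT1: "bool_rule (NotC x y) {Pos x} {Neg y}"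
| NOT2: "bool_rule (NotC x y) {Neg x} {Pos y}"
| NOT3: "bool_rule (NotC x y) {Pos y} {Neg x}"
| NOT4: "bool_rule (NotC x y) {Neg y} {Pos x}"
| AND1: "bool_rule (AndC x y z) {Pos x, Pos y} {Pos z}"
| AND2: "bool_rule (AndC x y z) {Pos x, Neg z} {Neg y}"
| AND3: "bool_rule (AndC x y z) {Pos y, Neg z} {Neg x}"
| AND4: "bool_rule (AndC x y z) {Neg x} {Neg z}"
| AND5: "bool_rule (AndC x y z) {Neg y} {Neg z}"
| AND6: "bool_rule (AndC x y z) {Pos z} {Pos x, Pos y}"
| OR1: "bool_rule (OrC x y z) {Pos x} {Pos z}"
| OR2: "bool_rule (OrC x y z) {Neg x, Neg y} {Neg z}"
| OR3: "bool_rule (OrC x y z) {Neg x, Pos z} {Pos y}"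
| OR4: "bool_rule (OrC x y z) {Neg y, Pos z} {Pos x}"
| OR5: "bool_rule (OrC x y z) {Pos y} {Pos z}"
| OR6: "bool_rule (OrC x y z) {Neg z} {Neg x, Neg y}"

definition bool_step :: "'v item set \<Rightarrow> 'v item set \<Rightarrow> bool" where
  "bool_step S S' \<longleftrightarrow>
     (\<exists>c P K. bool_rule c P K \<and> Con c \<in> S \<and> Lit ` P \<subseteq> S \<and> S' = (S - {Con c}) \<union> Lit ` K)"

definition bool_derives_le :: "nat \<Rightarrow> 'v item set \<Rightarrow> 'v item set \<Rightarrow> bool" where
  "bool_derives_le i S1 S2 \<longleftrightarrow> (\<exists>n\<le>i. (bool_step ^^ n) S1 S2)"

fun lit_con :: "'v lit \<Rightarrow> 'v \<Rightarrow> 'v bcon" where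
  "lit_con (Pos x) z = EqC x z" | "lit_con (Neg x) z = NotC x z"

text \<open>trans_eq Q z S F: S is trans(Q = z) for the literal list Q (order of literals),
  F being the set of fresh variables introduced (not including z).\<close>
inductive trans_eq :: "'v lit list \<Rightarrow> 'v \<Rightarrow> 'v item set \<Rightarrow> 'v set \<Rightarrow> bool" where
  unit: "trans_eq [l] z {Con (lit_con l z)} {}"
| pos: "\<lbrakk>trans_eq Q y S F; y \<notin> F\<rbrakk>
        \<Longrightarrow> trans_eq (Pos x # Q) z (insert (Con (OrC x y z)) S) (insert y F)"
| neg: "\<lbrakk>trans_eq Q y S F; y \<notin> F; v \<notin> F; v \<noteq> y\<rbrakk>
        \<Longrightarrow> trans_eq (Neg x # Q) z ({Con (NotC x v), Con (OrC v y z)} \<union> S) ({v, y} \<union> F)"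

definition trans_clause :: "'v clause \<Rightarrow> 'v item set \<Rightarrow> 'v set \<Rightarrow> bool" where
  "trans_clause C S F \<longleftrightarrow>
     (\<exists>u. C = {u} \<and> S = {Lit u} \<and> F = {})
   \<or> (\<exists>ls z S' F'. distinct ls \<and> set ls = C \<and> length ls \<ge> 2 \<and> trans_eq ls z S' F' \<and> z \<notin> F'
        \<and> S = insert (Lit (Pos z)) S' \<and> F = insert z F')"

definition is_translation :: "'v clause set \<Rightarrow> 'v item set \<Rightarrow> bool" where
  "is_translation \<phi> S \<longleftrightarrow>
     (\<exists>T F. (\<forall>C\<in>\<phi>. trans_clause C (T C) (F C) \<and> F C \<inter> vars \<phi> = {})
        \<and> (\<forall>C\<in>\<phi>. \<forall>D\<in>\<phi>. C \<noteq> D \<longrightarrow> F C \<inter> F D = {})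
        \<and> S = (\<Union>C\<in>\<phi>. T C))"

end

theory Submission
  imports Defs
begin

lemma ivars_simps[simp]: "ivars {} = {}" "ivars (insert i S) = item_vars i \<union> ivars S"
  "ivars (A \<union> B) = ivars A \<union> ivars B" "ivars (\<Union>x\<in>X. f x) = (\<Union>x\<in>X. ivars (f x))"
  by (auto simp: ivars_def)

lemma sat_simps[simp]: "sat t {} = True" "sat t (insert i S) = (item_val t i \<and> sat t S)"
  "sat t (A \<union> B) = (sat t A \<and> sat t B)"
  by (auto simp: sat_def)

lemma item_val_cong: "(\<forall>w\<in>item_vars i. \<tau> w = \<sigma> w) \<Longrightarrow> item_val \<tau> i = item_val \<sigma> i"
proof (cases i)
  case (Con c) assume "\<forall>w\<in>item_vars i. \<tau> w = \<sigma> w" then show ?thesis using Con by (cases c) auto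
next
  case (Lit l) assume "\<forall>w\<in>item_vars i. \<tau> w = \<sigma> w" then show ?thesis using Lit by (cases l) auto
qed

lemma sat_cong: "(\<forall>w\<in>ivars S. \<tau> w = \<sigma> w) \<Longrightarrow> sat \<tau> S = sat \<sigma> S"
proof -
  assume H: "\<forall>w\<in>ivars S. \<tau> w = \<sigma> w"
  have "\<forall>i\<in>S. item_val \<tau> i = item_val \<sigma> i"
  proof
    fix i assume "i \<in> S"
    then have "\<forall>w\<in>item_vars i. \<tau> w = \<sigma> w" using H unfolding ivars_def by blast
    then show "item_val \<tau> i = item_val \<sigma> i" by (rule item_val_cong)
  qed
  then show ?thesis unfolding sat_def by blast
qed

lemma trans_eq_ivars: "trans_eq ls z S F \<Longrightarrow> ivars S \<subseteq> var ` set ls \<union> {z} \<union> F"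
proof (induction rule: trans_eq.induct)
  case (unit l z) then show ?case by (cases l) auto
qed auto

lemma trans_eq_nonempty: "trans_eq ls z S F \<Longrightarrow> ls \<noteq> []"
  by (induction rule: trans_eq.induct) auto

lemma trans_eq_single0: "trans_eq ls z S F \<Longrightarrow> ls = [l] \<Longrightarrow> S = {Con (lit_con l z)} \<and> F = {}"
  by (induction rule: trans_eq.induct) (auto dest: trans_eq_nonempty)

lemma trans_eq_single: "trans_eq [l] z S F \<Longrightarrow> S = {Con (lit_con l z)} \<and> F = {}"
  using trans_eq_single0[of "[l]" z S F l] by simp

lemma trans_eq_sound: "trans_eq ls z S F \<Longrightarrow> sat \<sigma> S \<Longrightarrow> \<sigma> z = (\<exists>l\<in>set ls. lit_val \<sigma> l)"
proof (induction rule: trans_eq.induct)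
  case (unit l z) then show ?case by (cases l) (auto simp: sat_def)
qed (auto simp: sat_def)

lemma trans_eq_ext:
  "trans_eq ls z S F \<Longrightarrow> insert z F \<inter> var ` set ls = {} \<Longrightarrow> z \<notin> F \<Longrightarrow>
   \<exists>\<tau>. (\<forall>w. w \<notin> insert z F \<longrightarrow> \<tau> w = \<sigma> w) \<and> sat \<tau> S \<and> (\<tau> z = (\<exists>l\<in>set ls. lit_val \<sigma> l))"
proof (induction rule: trans_eq.induct)
  case (unit l z)
  show ?case
    by (rule exI[of _ "\<sigma>(z := lit_val \<sigma> l)"]) (use unit in \<open>cases l; auto simp: sat_def\<close>)
next
  case (pos Q y S F x z)
  from pos.IH pos.prems pos.hyps obtain \<tau>' where t': "\<forall>w. w \<notin> insert y F \<longrightarrow> \<tau>' w = \<sigma> w"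
    "sat \<tau>' S" "\<tau>' y = (\<exists>l\<in>set Q. lit_val \<sigma> l)" by auto
  define \<tau> where "\<tau> = \<tau>'(z := (\<sigma> x \<or> \<tau>' y))"
  have zn: "z \<notin> ivars S" using trans_eq_ivars[OF pos.hyps(1)] pos.prems by auto
  have "\<forall>w\<in>ivars S. \<tau> w = \<tau>' w" using zn by (auto simp: \<tau>_def)
  then have "sat \<tau> S" using t'(2) sat_cong[of S \<tau> \<tau>'] by blast
  moreover have "\<tau> x = \<sigma> x" using pos.prems t'(1) by (auto simp: \<tau>_def)
  moreover have "\<tau> y = \<tau>' y" "\<tau> z = (\<sigma> x \<or> \<tau>' y)" using pos.prems by (auto simp: \<tau>_def)
  ultimately have A: "sat \<tau> (insert (Con (OrC x y z)) S)" by simp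
  have B: "\<forall>w. w \<notin> insert z (insert y F) \<longrightarrow> \<tau> w = \<sigma> w" using t'(1) by (auto simp: \<tau>_def)
  have C: "\<tau> z = (\<exists>a\<in>set (Pos x # Q). lit_val \<sigma> a)" using t'(3) \<open>\<tau> z = _\<close> by simp
  show ?case using A B C by blast
next
  case (neg Q y S F v x z)
  from neg.IH neg.prems neg.hyps obtain \<tau>' where t': "\<forall>w. w \<notin> insert y F \<longrightarrow> \<tau>' w = \<sigma> w"
    "sat \<tau>' S" "\<tau>' y = (\<exists>l\<in>set Q. lit_val \<sigma> l)" by auto
  define \<tau> where "\<tau> = \<tau>'(v := \<not> \<sigma> x, z := (\<not> \<sigma> x \<or> \<tau>' y))"
  have zn: "z \<notin> ivars S" "v \<notin> ivars S" using trans_eq_ivars[OF neg.hyps(1)] neg.prems neg.hyps by auto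
  have "\<forall>w\<in>ivars S. \<tau> w = \<tau>' w" using zn by (auto simp: \<tau>_def)
  then have "sat \<tau> S" using t'(2) sat_cong[of S \<tau> \<tau>'] by blast
  moreover have "\<tau> x = \<sigma> x" using neg.prems neg.hyps t'(1) by (auto simp: \<tau>_def)
  moreover have "\<tau> y = \<tau>' y" "\<tau> z = (\<not> \<sigma> x \<or> \<tau>' y)" "\<tau> v = (\<not> \<sigma> x)" using neg.prems neg.hyps by (auto simp: \<tau>_def)
  ultimately have A: "sat \<tau> ({Con (NotC x v), Con (OrC v y z)} \<union> S)" by simp
  have B: "\<forall>w. w \<notin> insert z ({v, y} \<union> F) \<longrightarrow> \<tau> w = \<sigma> w" using t'(1) by (auto simp: \<tau>_def)
  have C: "\<tau> z = (\<exists>a\<in>set (Neg x # Q). lit_val \<sigma> a)" using t'(3) \<open>\<tau> z = (\<not> \<sigma> x \<or> \<tau>' y)\<close> by simp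
  show ?case using A B C by blast
qed

lemma trans_eq_exists:
  assumes inf: "infinite (UNIV::'v set)"
  shows "ls \<noteq> [] \<Longrightarrow> finite A \<Longrightarrow> \<exists>S F. trans_eq ls (z::'v) S F \<and> F \<inter> A = {} \<and> finite F"
proof (induction ls arbitrary: z A)
  case Nil thus ?case by simp
next
  case (Cons l ls)
  show ?case
  proof (cases "ls = []")
    case True thus ?thesis by (intro exI[of _ "{Con (lit_con l z)}"] exI[of _ "{}"]) (auto intro: trans_eq.unit)
  next
    case False
    obtain y where y: "y \<notin> A" using ex_new_if_finite[OF inf Cons.prems(2)] by blast
    have "finite (insert y A)" using Cons.prems(2) by simp
    then obtain v where v: "v \<notin> insert y A" using ex_new_if_finite[OF inf] by blast
    have "finite (insert v (insert y A))" using Cons.prems(2) by simp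
    from Cons.IH[OF False this, of y] obtain S F where SF: "trans_eq ls y S F"
      "F \<inter> insert v (insert y A) = {}" "finite F" by blast
    show ?thesis
    proof (cases l)
      case (Pos x)
      have "trans_eq (Pos x # ls) z (insert (Con (OrC x y z)) S) (insert y F)"
        by (rule trans_eq.pos) (use SF in auto)
      moreover have "insert y F \<inter> A = {}" using SF y by auto
      ultimately show ?thesis using Pos SF(3) by (intro exI) auto
    next
      case (Neg x)
      have "trans_eq (Neg x # ls) z ({Con (NotC x v), Con (OrC v y z)} \<union> S) ({v, y} \<union> F)"
        by (rule trans_eq.neg) (use SF v in auto)
      moreover have "({v, y} \<union> F) \<inter> A = {}" using SF y v by auto
      ultimately show ?thesis using Neg SF(3) by (intro exI) auto
    qed
  qed
qed

lemma clause_exists: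
  assumes inf: "infinite (UNIV::'v set)" and "finite C" "C \<noteq> {}" "finite A"
  shows "\<exists>S F. trans_clause (C::'v clause) S F \<and> F \<inter> A = {} \<and> finite F"
proof -
  obtain ls where ls: "distinct ls" "set ls = C" using finite_distinct_list[OF assms(2)] by blast
  show ?thesis
  proof (cases "length ls \<ge> 2")
    case True
    obtain z where z: "z \<notin> A" using ex_new_if_finite[OF inf assms(4)] by blast
    have "ls \<noteq> []" using True by auto
    then obtain S F where SF: "trans_eq ls z S F" "F \<inter> insert z A = {}" "finite F"
      using trans_eq_exists[OF inf, of ls "insert z A" z] assms(4) by auto
    have "z \<notin> F" using SF(2) by auto
    then have "trans_clause C (insert (Lit (Pos z)) S) (insert z F)"
      unfolding trans_clause_def using ls True SF(1)
      by (intro disjI2 exI[of _ ls] exI[of _ z] exI[of _ S] exI[of _ F]) auto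
    moreover have "insert z F \<inter> A = {}" using SF z by auto
    ultimately show ?thesis using SF(3) by (intro exI) auto
  next
    case False
    have "ls \<noteq> []" using ls assms(3) by auto
    then have "length ls = Suc 0" using False by (cases ls) (auto simp: Suc_le_eq)
    then obtain u where "ls = [u]" by (auto simp: length_Suc_conv)
    then have "C = {u}" using ls by auto
    then have "trans_clause C {Lit u} {}" unfolding trans_clause_def by auto
    then show ?thesis by (intro exI) auto
  qed
qed

lemma trans_clause_cases:
  assumes "trans_clause C S F"
  obtains (u) u where "C = {u}" "S = {Lit u}" "F = {}"
    | (m) ls z S' F' where "distinct ls" "set ls = C" "length ls \<ge> 2" "trans_eq ls z S' F'" "z \<notin> F'"
        "S = insert (Lit (Pos z)) S'" "F = insert z F'"
  using assms unfolding trans_clause_def by metis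

lemma trans_clause_ivars: "trans_clause C S F \<Longrightarrow> ivars S \<subseteq> var ` C \<union> F"
proof (induction rule: trans_clause_cases)
  case (m ls z S' F') then show ?case using trans_eq_ivars[OF m(4)] by auto
qed auto

lemma trans_clause_sound: "trans_clause C S F \<Longrightarrow> sat \<sigma> S \<Longrightarrow> \<exists>l\<in>C. lit_val \<sigma> l"
proof (induction rule: trans_clause_cases)
  case (m ls z S' F') then show ?case using trans_eq_sound[OF m(4), of \<sigma>] by auto
qed auto

lemma trans_clause_unit: "trans_clause {u} S F \<Longrightarrow> S = {Lit u} \<and> F = {}"
proof (induction rule: trans_clause_cases)
  case (m ls z S' F')
  have "length ls = card {u}" using m(1,2) distinct_card by metis
  then show ?case using m(3) by simp
qed auto

lemma set_exists:
  assumes inf: "infinite (UNIV::'v set)"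
  shows "finite \<phi> \<Longrightarrow> \<forall>C\<in>\<phi>. finite C \<and> C \<noteq> {} \<Longrightarrow> finite A \<Longrightarrow>
    \<exists>T F. (\<forall>C\<in>\<phi>. trans_clause (C::'v clause) (T C) (F C) \<and> F C \<inter> A = {} \<and> finite (F C))
      \<and> (\<forall>C\<in>\<phi>. \<forall>D\<in>\<phi>. C \<noteq> D \<longrightarrow> F C \<inter> F D = {})"
proof (induction \<phi> rule: finite_induct)
  case empty thus ?case by auto
next
  case (insert D \<phi>)
  then obtain T F where TF: "\<forall>C\<in>\<phi>. trans_clause C (T C) (F C) \<and> F C \<inter> A = {} \<and> finite (F C)"
      "\<forall>C\<in>\<phi>. \<forall>D\<in>\<phi>. C \<noteq> D \<longrightarrow> F C \<inter> F D = {}" by auto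
  have "finite (A \<union> (\<Union>C\<in>\<phi>. F C))" using TF insert.prems insert.hyps by auto
  moreover have "finite D" "D \<noteq> {}" using insert.prems by auto
  ultimately obtain S G where SG: "trans_clause D S G" "G \<inter> (A \<union> (\<Union>C\<in>\<phi>. F C)) = {}" "finite G"
    using clause_exists[OF inf, of D "A \<union> (\<Union>C\<in>\<phi>. F C)"] by blast
  have 1: "\<forall>C\<in>insert D \<phi>. trans_clause C ((T(D := S)) C) ((F(D := G)) C) \<and> (F(D := G)) C \<inter> A = {} \<and> finite ((F(D := G)) C)"
    using TF(1) SG by auto
  have 2: "\<forall>C\<in>insert D \<phi>. \<forall>E\<in>insert D \<phi>. C \<noteq> E \<longrightarrow> (F(D := G)) C \<inter> (F(D := G)) E = {}"
  proof (intro ballI impI)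
    fix C E assume "C \<in> insert D \<phi>" "E \<in> insert D \<phi>" "C \<noteq> E"
    then consider "C = D" "E \<in> \<phi>" | "E = D" "C \<in> \<phi>" | "C \<in> \<phi>" "E \<in> \<phi>" "C \<noteq> D" "E \<noteq> D" by auto
    then show "(F(D := G)) C \<inter> (F(D := G)) E = {}"
    proof cases
      case 1 then have "E \<noteq> D" using insert.hyps by auto
      then show ?thesis using 1 SG(2) by auto
    next
      case 2 then have "C \<noteq> D" using insert.hyps by auto
      then show ?thesis using 2 SG(2) by auto
    next
      case 3 then show ?thesis using TF(2) \<open>C \<noteq> E\<close> by simp
    qed
  qed
  show ?case by (rule exI[of _ "T(D := S)"], rule exI[of _ "F(D := G)"], rule conjI[OF 1 2])
qed

lemma sem_add:
  assumes "trans_clause C TC FC" "FC \<inter> ivars S2 = {}" "FC \<inter> var ` C = {}"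
    "\<forall>\<sigma>. sat \<sigma> S2 \<longrightarrow> (\<exists>l\<in>C. lit_val \<sigma> l)"
  shows "sem_follows S2 TC"
  unfolding sem_follows_def
proof (intro allI impI)
  fix \<sigma> assume s: "sat \<sigma> S2"
  then obtain l where l: "l \<in> C" "lit_val \<sigma> l" using assms(4) by blast
  from assms(1) consider (u) u where "C = {u}" "TC = {Lit u}" "FC = {}"
    | (m) ls z S' F' where "distinct ls" "set ls = C" "trans_eq ls z S' F'" "z \<notin> F'"
        "TC = insert (Lit (Pos z)) S'" "FC = insert z F'"
    unfolding trans_clause_def by blast
  then show "\<exists>\<tau>. (\<forall>x\<in>ivars S2. \<tau> x = \<sigma> x) \<and> sat \<tau> TC"
  proof cases
    case u then show ?thesis using l by (intro exI[of _ \<sigma>]) auto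
  next
    case m
    obtain \<tau> where t: "\<forall>w. w \<notin> insert z F' \<longrightarrow> \<tau> w = \<sigma> w" "sat \<tau> S'"
      "\<tau> z = (\<exists>l\<in>set ls. lit_val \<sigma> l)"
      using trans_eq_ext[OF m(3), of \<sigma>] m assms(3) by auto
    have "\<forall>x\<in>ivars S2. \<tau> x = \<sigma> x" using t(1) assms(2) m by auto
    moreover have "sat \<tau> TC" using t l m by auto
    ultimately show ?thesis by blast
  qed
qed

lemma sem_lits:
  assumes "\<forall>l\<in>L. var l \<notin> ivars S" "\<forall>l\<in>L. comp l \<notin> L"
  shows "sem_follows S (Lit ` L)"
  unfolding sem_follows_def
proof (intro allI impI)
  fix \<sigma>
  define \<tau> where "\<tau> w = (if Pos w \<in> L then True else if Neg w \<in> L then False else \<sigma> w)" for w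
  have "\<forall>x\<in>ivars S. \<tau> x = \<sigma> x"
    using assms(1) by (auto simp: \<tau>_def)
  moreover have "sat \<tau> (Lit ` L)"
    unfolding sat_def
  proof
    fix i assume "i \<in> Lit ` L"
    then obtain l where "i = Lit l" "l \<in> L" by blast
    then show "item_val \<tau> i" using assms(2) by (cases l) (auto simp: \<tau>_def)
  qed
  ultimately show "\<exists>\<tau>. (\<forall>x\<in>ivars S. \<tau> x = \<sigma> x) \<and> sat \<tau> (Lit ` L)" by blast
qed

lemma is_translation_insert:
  assumes "C \<notin> R" "\<forall>D\<in>R. trans_clause D (T D) (F D) \<and> F D \<inter> vars (insert C R) = {}"
    "\<forall>D\<in>R. \<forall>E\<in>R. D \<noteq> E \<longrightarrow> F D \<inter> F E = {}" "trans_clause C TC FC"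
    "FC \<inter> vars (insert C R) = {}" "\<forall>D\<in>R. FC \<inter> F D = {}"
  shows "is_translation (insert C R) (TC \<union> (\<Union>D\<in>R. T D))"
proof -
  have e: "(\<Union>D\<in>insert C R. (T(C := TC)) D) = TC \<union> (\<Union>D\<in>R. T D)" using assms(1) by auto
  have 1: "\<forall>D\<in>insert C R. trans_clause D ((T(C := TC)) D) ((F(C := FC)) D) \<and> (F(C := FC)) D \<inter> vars (insert C R) = {}"
    using assms(1,2,4,5) by auto
  have 2: "\<forall>D\<in>insert C R. \<forall>E\<in>insert C R. D \<noteq> E \<longrightarrow> (F(C := FC)) D \<inter> (F(C := FC)) E = {}"
  proof (intro ballI impI)
    fix D E assume "D \<in> insert C R" "E \<in> insert C R" "D \<noteq> E"
    then consider "D = C" "E \<in> R" | "E = C" "D \<in> R" | "D \<in> R" "E \<in> R" "D \<noteq> C" "E \<noteq> C" by auto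
    then show "(F(C := FC)) D \<inter> (F(C := FC)) E = {}"
    proof cases
      case 1 then have "E \<noteq> C" using assms(1) by auto
      then show ?thesis using 1 assms(6) by auto
    next
      case 2 then have "D \<noteq> C" using assms(1) by auto
      then show ?thesis using 2 assms(6) by auto
    next
      case 3 then show ?thesis using assms(3) \<open>D \<noteq> E\<close> by simp
    qed
  qed
  show ?thesis unfolding is_translation_def
    by (rule exI[of _ "T(C := TC)"], rule exI[of _ "F(C := FC)"], rule conjI[OF 1 conjI[OF 2 e[symmetric]]])
qed

lemma is_translation_plain:
  assumes "\<forall>D\<in>R. trans_clause D (T D) (F D) \<and> F D \<inter> vars R = {}"
    "\<forall>D\<in>R. \<forall>E\<in>R. D \<noteq> E \<longrightarrow> F D \<inter> F E = {}"
  shows "is_translation R (\<Union>D\<in>R. T D)"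
  unfolding is_translation_def using assms by blast

lemma bool_rule_litcon: "bool_rule (lit_con l y) {Pos y} {l}"
  by (cases l) (auto intro: bool_rule.intros)

lemma derives2: "(bool_step ^^ k) A B \<Longrightarrow> k \<le> 2 \<Longrightarrow> bool_step B C \<Longrightarrow> bool_derives_le 3 A C"
  unfolding bool_derives_le_def by (intro exI[of _ "Suc k"]) auto

lemma derives0: "(bool_step ^^ k) A B \<Longrightarrow> k \<le> 3 \<Longrightarrow> bool_derives_le 3 A B"
  unfolding bool_derives_le_def by blast

lemma item_in_ivars: "i \<in> S \<Longrightarrow> item_vars i \<subseteq> ivars S"
  by (auto simp: ivars_def)

lemma trans_eq_finite: "trans_eq ls z S F \<Longrightarrow> finite S"
  by (induction rule: trans_eq.induct) auto

lemma trans_clause_finite: "trans_clause C S F \<Longrightarrow> finite S"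
  by (induction rule: trans_clause_cases) (auto dest: trans_eq_finite)

lemma vars_finite: "finite \<phi> \<Longrightarrow> \<forall>C\<in>\<phi>. finite C \<Longrightarrow> finite (vars \<phi>)"
  by (auto simp: vars_def)

lemma vars_mono: "\<phi> \<subseteq> \<psi> \<Longrightarrow> vars \<phi> \<subseteq> vars \<psi>"
  by (auto simp: vars_def)

lemma vars_mem: "D \<in> \<phi> \<Longrightarrow> var ` D \<subseteq> vars \<phi>"
  by (auto simp: vars_def)

lemma phase1:
  assumes "Lit u \<in> R0" "trans_eq ls' y S' F'" "ls' \<noteq> []" "distinct ls'" "comp u \<notin> set ls'"
    "z \<noteq> v" "z \<noteq> y" "v \<noteq> y" "z \<notin> F'" "v \<notin> F'" "y \<notin> F'"
    "z \<notin> ivars R0" "v \<notin> ivars R0" "z \<notin> ivars S'" "v \<notin> ivars S'"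
  shows "\<exists>TC FC L0 k. k \<le> 2 \<and> trans_clause (insert (comp u) (set ls')) TC FC \<and> FC \<subseteq> {z,v,y} \<union> F'
    \<and> (bool_step ^^ k) (TC \<union> R0) (R0 \<union> insert (Lit (Pos y)) S' \<union> Lit ` L0) \<and> L0 \<subseteq> {Pos z, Neg v}"
proof (cases u)
  case (Pos x)
  have xR: "x \<in> ivars R0" using item_in_ivars[OF assms(1)] Pos by auto
  define S0 where "S0 = {Con (NotC x v), Con (OrC v y z)} \<union> S'"
  define F0 where "F0 = {v, y} \<union> F'"
  have te: "trans_eq (Neg x # ls') z S0 F0" unfolding S0_def F0_def
    by (rule trans_eq.neg) (use assms in auto)
  define TC where "TC = insert (Lit (Pos z)) S0"
  define FC where "FC = insert z F0"
  have tc: "trans_clause (insert (comp u) (set ls')) TC FC"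
    unfolding trans_clause_def TC_def FC_def
    apply (rule disjI2)
    apply (rule exI[of _ "Neg x # ls'"], rule exI[of _ z], rule exI[of _ S0], rule exI[of _ F0])
    using te assms Pos by (auto simp: F0_def Suc_le_eq)
  have n1: "Con (NotC x v) \<notin> R0" "Con (OrC v y z) \<notin> R0"
    using item_in_ivars[of _ R0] assms(13) by force+
  have n2: "Con (NotC x v) \<notin> S'" "Con (OrC v y z) \<notin> S'"
    using item_in_ivars[of _ S'] assms(15) by force+
  define S1 where "S1 = TC \<union> R0"
  define M1 where "M1 = (S1 - {Con (NotC x v)}) \<union> Lit ` {Neg v}"
  define M2 where "M2 = (M1 - {Con (OrC v y z)}) \<union> Lit ` {Pos y}"
  have st1: "bool_step S1 M1" unfolding bool_step_def
    apply (rule exI[of _ "NotC x v"], rule exI[of _ "{Pos x}"], rule exI[of _ "{Neg v}"])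
    using assms(1) Pos by (auto simp: S1_def TC_def S0_def M1_def intro: bool_rule.intros)
  have st2: "bool_step M1 M2" unfolding bool_step_def
    apply (rule exI[of _ "OrC v y z"], rule exI[of _ "{Neg v, Pos z}"], rule exI[of _ "{Pos y}"])
    by (auto simp: S1_def TC_def S0_def M1_def M2_def intro: bool_rule.intros)
  have eq: "M2 = R0 \<union> insert (Lit (Pos y)) S' \<union> Lit ` {Pos z, Neg v}"
    using n1 n2 by (auto simp: S1_def TC_def S0_def M1_def M2_def)
  have "(bool_step ^^ Suc (Suc 0)) S1 M2"
    by (rule relpowp_Suc_I[where P=bool_step, OF relpowp_Suc_I[where P=bool_step, OF relpowp_0_I[where P=bool_step] st1] st2])
  then show ?thesis using tc eq
    by (intro exI[of _ TC] exI[of _ FC] exI[of _ "{Pos z, Neg v}"] exI[of _ "Suc (Suc 0)"])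
      (auto simp: S1_def FC_def F0_def)
next
  case (Neg x)
  have xR: "x \<in> ivars R0" using item_in_ivars[OF assms(1)] Neg by auto
  define S0 where "S0 = insert (Con (OrC x y z)) S'"
  define F0 where "F0 = insert y F'"
  have te: "trans_eq (Pos x # ls') z S0 F0" unfolding S0_def F0_def
    by (rule trans_eq.pos) (use assms in auto)
  define TC where "TC = insert (Lit (Pos z)) S0"
  define FC where "FC = insert z F0"
  have tc: "trans_clause (insert (comp u) (set ls')) TC FC"
    unfolding trans_clause_def TC_def FC_def
    apply (rule disjI2)
    apply (rule exI[of _ "Pos x # ls'"], rule exI[of _ z], rule exI[of _ S0], rule exI[of _ F0])
    using te assms Neg by (auto simp: F0_def Suc_le_eq)
  have n1: "Con (OrC x y z) \<notin> R0"
    using item_in_ivars[of _ R0] assms(12) by force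
  have n2: "Con (OrC x y z) \<notin> S'"
    using item_in_ivars[of _ S'] assms(14) by force
  define S1 where "S1 = TC \<union> R0"
  define M1 where "M1 = (S1 - {Con (OrC x y z)}) \<union> Lit ` {Pos y}"
  have st1: "bool_step S1 M1" unfolding bool_step_def
    apply (rule exI[of _ "OrC x y z"], rule exI[of _ "{Neg x, Pos z}"], rule exI[of _ "{Pos y}"])
    using assms(1) Neg by (auto simp: S1_def TC_def S0_def M1_def intro: bool_rule.intros)
  have eq: "M1 = R0 \<union> insert (Lit (Pos y)) S' \<union> Lit ` {Pos z}"
    using n1 n2 by (auto simp: S1_def TC_def S0_def M1_def)
  have "(bool_step ^^ Suc 0) S1 M1"
    by (rule relpowp_Suc_I[where P=bool_step, OF relpowp_0_I[where P=bool_step] st1])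
  then show ?thesis using tc eq
    by (intro exI[of _ TC] exI[of _ FC] exI[of _ "{Pos z}"] exI[of _ "Suc 0"])
      (auto simp: S1_def FC_def F0_def)
qed

theorem theorem3:
  fixes \<phi>1 \<phi>2 :: "'v clause set"
  assumes "infinite (UNIV :: 'v set)"
    and "finite \<phi>1" and "\<forall>C\<in>\<phi>1. finite C"
    and "finite \<phi>2" and "\<forall>C\<in>\<phi>2. finite C"
    and "{} \<notin> \<phi>2"
    and "unit_step \<phi>1 \<phi>2"
  shows "\<exists>S1 S2 \<C>. is_translation \<phi>1 S1 \<and> is_translation \<phi>2 S2 \<and> finite \<C>
           \<and> bool_derives_le 3 S1 (S2 \<union> \<C>) \<and> sem_follows S2 \<C>"
proof -
  note inf = assms(1)
  define A0 where "A0 = vars \<phi>1"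
  have finA0: "finite A0" unfolding A0_def using vars_finite assms(2,3) by blast
  obtain u C where uC: "{u} \<in> \<phi>1" "C \<in> \<phi>1"
    and cases: "(comp u \<in> C \<and> \<phi>2 = (\<phi>1 - {C}) \<union> {C - {comp u}}) \<or> (u \<in> C \<and> C \<noteq> {u} \<and> \<phi>2 = \<phi>1 - {C})"
    using assms(7) unfolding unit_step_def by blast
  define R where "R = \<phi>1 - {C}"
  have R2: "R \<subseteq> \<phi>2" using cases unfolding R_def by auto
  have uneq: "{u} \<noteq> C" using cases by (cases u) auto
  have uR: "{u} \<in> R" using uC uneq unfolding R_def by auto
  have CR: "C \<notin> R" "insert C R = \<phi>1" using uC unfolding R_def by auto
  have v2: "vars \<phi>2 \<subseteq> A0" using cases unfolding A0_def vars_def using uC(2) by auto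
  have RA: "vars R \<subseteq> A0" unfolding A0_def R_def by (rule vars_mono) auto
  have finR: "finite R" using assms(2) unfolding R_def by auto
  have Rne: "\<forall>D\<in>R. finite D \<and> D \<noteq> {}" using R2 assms(5,6) by auto
  obtain T F where TF: "\<forall>D\<in>R. trans_clause D (T D) (F D) \<and> F D \<inter> A0 = {} \<and> finite (F D)"
    "\<forall>D\<in>R. \<forall>E\<in>R. D \<noteq> E \<longrightarrow> F D \<inter> F E = {}"
    using set_exists[OF inf finR Rne finA0] by blast
  define S2R where "S2R = (\<Union>D\<in>R. T D)"
  define Fall where "Fall = (\<Union>D\<in>R. F D)"
  have finFall: "finite Fall" unfolding Fall_def using TF(1) finR by auto
  have ivR: "ivars S2R \<subseteq> A0 \<union> Fall"
  proof -
    have "\<forall>D\<in>R. ivars (T D) \<subseteq> A0 \<union> Fall"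
    proof
      fix D assume D: "D \<in> R"
      have "ivars (T D) \<subseteq> var ` D \<union> F D" using trans_clause_ivars TF(1) D by blast
      moreover have "var ` D \<subseteq> A0" using vars_mem[OF D] RA by blast
      moreover have "F D \<subseteq> Fall" using D unfolding Fall_def by auto
      ultimately show "ivars (T D) \<subseteq> A0 \<union> Fall" by blast
    qed
    then show ?thesis unfolding S2R_def by auto
  qed
  have uS: "Lit u \<in> S2R" using trans_clause_unit[of u "T {u}" "F {u}"] TF(1) uR unfolding S2R_def by auto
  have TFphi1: "\<forall>D\<in>R. trans_clause D (T D) (F D) \<and> F D \<inter> vars (insert C R) = {}"
    using TF(1) CR(2) unfolding A0_def by auto
  have finC: "finite C" using uC assms(3) by auto
  have varC: "var ` C \<subseteq> A0" unfolding A0_def using vars_mem[OF uC(2)] .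
  have zero_case: "\<exists>S1 S2 \<C>. is_translation \<phi>1 S1 \<and> is_translation \<phi>2 S2 \<and> finite \<C>
           \<and> bool_derives_le 3 S1 (S2 \<union> \<C>) \<and> sem_follows S2 \<C>"
    if p2: "\<phi>2 = R" and sem: "\<forall>\<sigma>. sat \<sigma> S2R \<longrightarrow> (\<exists>l\<in>C. lit_val \<sigma> l)"
  proof -
    have "C \<noteq> {}" using cases by auto
    moreover have "finite (A0 \<union> Fall)" using finA0 finFall by auto
    ultimately obtain TC FC where TC: "trans_clause C TC FC" "FC \<inter> (A0 \<union> Fall) = {}" "finite FC"
      using clause_exists[OF inf finC] by blast
    have t1: "is_translation \<phi>1 (TC \<union> S2R)"
      unfolding S2R_def CR(2)[symmetric]
      by (rule is_translation_insert[OF CR(1) TFphi1 TF(2) TC(1)])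
        (use TC(2) CR(2) Fall_def in \<open>auto simp: A0_def\<close>)
    have t2: "is_translation \<phi>2 S2R"
    proof -
      have "\<forall>D\<in>R. trans_clause D (T D) (F D) \<and> F D \<inter> vars R = {}"
      proof
        fix D assume D: "D \<in> R"
        then have "F D \<inter> A0 = {}" "trans_clause D (T D) (F D)" using TF(1) by auto
        moreover have "F D \<inter> vars R \<subseteq> F D \<inter> A0" using RA by auto
        ultimately show "trans_clause D (T D) (F D) \<and> F D \<inter> vars R = {}" by auto
      qed
      then show ?thesis unfolding S2R_def p2 by (rule is_translation_plain[OF _ TF(2)])
    qed
    have d: "bool_derives_le 3 (TC \<union> S2R) (S2R \<union> TC)"
      by (rule derives0[of 0]) (auto simp: Un_commute)
    have s: "sem_follows S2R TC"
      by (rule sem_add[OF TC(1)]) (use TC(2) ivR varC sem in auto)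
    show ?thesis using t1 t2 d s trans_clause_finite[OF TC(1)] by blast
  qed
  from cases show ?thesis
  proof (elim disjE conjE)
    assume uinC: "u \<in> C" and "C \<noteq> {u}" and p2: "\<phi>2 = \<phi>1 - {C}"
    show ?thesis
    proof (rule zero_case)
      show "\<phi>2 = R" using p2 R_def by simp
      show "\<forall>\<sigma>. sat \<sigma> S2R \<longrightarrow> (\<exists>l\<in>C. lit_val \<sigma> l)" using uS uinC unfolding sat_def by (metis item_val.simps(5))
    qed
  next
    assume cu: "comp u \<in> C" and p2: "\<phi>2 = \<phi>1 - {C} \<union> {C - {comp u}}"
    define C' where "C' = C - {comp u}"
    have p2': "\<phi>2 = insert C' R" using p2 unfolding C'_def R_def by auto
    show ?thesis
    proof (cases "C' \<in> R")
      case True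
      show ?thesis
      proof (rule zero_case)
        show "\<phi>2 = R" using p2' True by auto
        show "\<forall>\<sigma>. sat \<sigma> S2R \<longrightarrow> (\<exists>l\<in>C. lit_val \<sigma> l)"
        proof (intro allI impI)
          fix \<sigma> assume "sat \<sigma> S2R"
          then have "sat \<sigma> (T C')" using True unfolding S2R_def sat_def by auto
          then obtain l where "l \<in> C'" "lit_val \<sigma> l" using trans_clause_sound TF(1) True by blast
          then show "\<exists>l\<in>C. lit_val \<sigma> l" unfolding C'_def by auto
        qed
      qed
    next
      case False
      have C'ne: "C' \<noteq> {}" "finite C'" using p2' assms(5,6) by auto
      obtain ls' where ls': "distinct ls'" "set ls' = C'" using finite_distinct_list[OF C'ne(2)] by blast
      have lsne: "ls' \<noteq> []" using ls' C'ne by auto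
      define A1 where "A1 = A0 \<union> Fall"
      have finA1: "finite A1" using finA0 finFall A1_def by auto
      obtain z where z: "z \<notin> A1" using ex_new_if_finite[OF inf finA1] by blast
      obtain v where v: "v \<notin> insert z A1" using ex_new_if_finite[OF inf] finA1 by (meson finite_insert)
      obtain y where y: "y \<notin> insert v (insert z A1)" using ex_new_if_finite[OF inf] finA1 by (meson finite_insert)
      have "finite (insert y (insert v (insert z A1)))" using finA1 by auto
      then obtain S' F' where SF: "trans_eq ls' y S' F'" "F' \<inter> insert y (insert v (insert z A1)) = {}" "finite F'"
        using trans_eq_exists[OF inf lsne] by blast
      have varC': "var ` C' \<subseteq> A0" using varC C'_def by auto
      have ivS': "ivars S' \<subseteq> var ` C' \<union> {y} \<union> F'" using trans_eq_ivars[OF SF(1)] ls' by auto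
      have zC: "z \<notin> var ` C'" "v \<notin> var ` C'" using varC' z v A1_def by auto
      have zS: "z \<notin> ivars S'" "v \<notin> ivars S'"
      proof -
        have "z \<notin> var ` C' \<union> {y} \<union> F'" "v \<notin> var ` C' \<union> {y} \<union> F'" using zC y SF(2) by auto
        then show "z \<notin> ivars S'" "v \<notin> ivars S'" using ivS' by blast+
      qed
      have "\<exists>TC FC L0 k. k \<le> 2 \<and> trans_clause (insert (comp u) (set ls')) TC FC \<and> FC \<subseteq> {z,v,y} \<union> F'
        \<and> (bool_step ^^ k) (TC \<union> S2R) (S2R \<union> insert (Lit (Pos y)) S' \<union> Lit ` L0) \<and> L0 \<subseteq> {Pos z, Neg v}"
        apply (rule phase1[OF uS SF(1) lsne ls'(1)])
        using ls' C'_def z v y SF(2) ivR zS A1_def by auto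
      moreover have "insert (comp u) (set ls') = C" using ls' C'_def cu by auto
      ultimately obtain TC FC L0 k where P: "k \<le> 2" "trans_clause C TC FC" "FC \<subseteq> {z,v,y} \<union> F'"
        "(bool_step ^^ k) (TC \<union> S2R) (S2R \<union> insert (Lit (Pos y)) S' \<union> Lit ` L0)" "L0 \<subseteq> {Pos z, Neg v}"
        by metis
      have FCd: "FC \<inter> A1 = {}" using P(3) z v y SF(2) by auto
      have t1: "is_translation \<phi>1 (TC \<union> S2R)"
        unfolding S2R_def CR(2)[symmetric]
        by (rule is_translation_insert[OF CR(1) TFphi1 TF(2) P(2)])
          (use FCd CR(2) in \<open>auto simp: A0_def A1_def Fall_def\<close>)
      have TFphi2: "\<forall>D\<in>R. trans_clause D (T D) (F D) \<and> F D \<inter> vars (insert C' R) = {}"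
        using TF(1) v2 p2' by auto
      have vz: "v \<noteq> z" "y \<noteq> z" "y \<noteq> v" using v y by auto
      have L0c: "\<forall>l\<in>L0. comp l \<notin> L0"
      proof
        fix l assume "l \<in> L0" then show "comp l \<notin> L0" using P(5) vz by (cases l) auto
      qed
      show ?thesis
      proof (cases "length ls' \<ge> 2")
        case True
        define TC' where "TC' = insert (Lit (Pos y)) S'"
        have tc': "trans_clause C' TC' (insert y F')"
          unfolding trans_clause_def TC'_def
          by (rule disjI2, rule exI[of _ ls'], rule exI[of _ y], rule exI[of _ S'], rule exI[of _ F'])
            (use ls' True SF in auto)
        have t2: "is_translation \<phi>2 (TC' \<union> S2R)"
          unfolding S2R_def p2'
          by (rule is_translation_insert[OF False TFphi2 TF(2) tc'])
            (use SF(2) y v2 p2' in \<open>auto simp: A1_def Fall_def\<close>)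
        have d: "bool_derives_le 3 (TC \<union> S2R) ((TC' \<union> S2R) \<union> Lit ` L0)"
          by (rule derives0[OF _ order.trans[OF P(1)]]) (use P(4) in \<open>auto simp: TC'_def Un_ac\<close>)
        have ivS2: "ivars (TC' \<union> S2R) \<subseteq> A0 \<union> Fall \<union> {y} \<union> F'"
          using ivS' ivR varC' unfolding TC'_def by auto
        have s: "sem_follows (TC' \<union> S2R) (Lit ` L0)"
        proof (rule sem_lits[OF _ L0c])
          have "z \<notin> A0 \<union> Fall \<union> {y} \<union> F'" "v \<notin> A0 \<union> Fall \<union> {y} \<union> F'"
            using z v y SF(2) A1_def by auto
          then have "z \<notin> ivars (TC' \<union> S2R)" "v \<notin> ivars (TC' \<union> S2R)" using ivS2 by blast+
          moreover have "\<forall>l\<in>L0. var l = z \<or> var l = v" using P(5) by auto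
          ultimately show "\<forall>l\<in>L0. var l \<notin> ivars (TC' \<union> S2R)" by metis
        qed
        have "finite (Lit ` L0)" using P(5) finite_subset by auto
        then show ?thesis using t1 t2 d s by blast
      next
        case False2: False
        then obtain l where l: "ls' = [l]" using lsne
          by (cases ls') (auto simp: Suc_le_eq)
        have SF1: "S' = {Con (lit_con l y)}" "F' = {}" using trans_eq_single[of l y S' F'] SF(1) l by auto
        have C'l: "C' = {l}" using ls' l by auto
        have tc': "trans_clause C' {Lit l} {}" unfolding trans_clause_def C'l by auto
        have t2: "is_translation \<phi>2 ({Lit l} \<union> S2R)"
          unfolding S2R_def p2'
          by (rule is_translation_insert[OF False TFphi2 TF(2) tc']) auto
        define M where "M = S2R \<union> insert (Lit (Pos y)) S' \<union> Lit ` L0"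
        define M' where "M' = (M - {Con (lit_con l y)}) \<union> Lit ` {l}"
        have st: "bool_step M M'" unfolding bool_step_def
          apply (rule exI[of _ "lit_con l y"], rule exI[of _ "{Pos y}"], rule exI[of _ "{l}"])
          using bool_rule_litcon by (auto simp: M_def M'_def SF1)
        have yR: "y \<notin> ivars S2R" using ivR y A1_def by auto
        have nR: "Con (lit_con l y) \<notin> S2R"
          using item_in_ivars[of "Con (lit_con l y)" S2R] yR by (cases l) auto
        have eq: "M' = ({Lit l} \<union> S2R) \<union> Lit ` (insert (Pos y) L0)"
          using nR by (auto simp: M_def M'_def SF1)
        have d: "bool_derives_le 3 (TC \<union> S2R) (({Lit l} \<union> S2R) \<union> Lit ` (insert (Pos y) L0))"
          using derives2[OF P(4) P(1) st[unfolded M_def]] eq M'_def M_def by simp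
        have ivS2: "ivars ({Lit l} \<union> S2R) \<subseteq> A0 \<union> Fall"
          using ivR varC' C'l by auto
        have L1c: "\<forall>l\<in>insert (Pos y) L0. comp l \<notin> insert (Pos y) L0"
        proof
          fix l assume "l \<in> insert (Pos y) L0"
          then show "comp l \<notin> insert (Pos y) L0" using P(5) vz by (cases l) auto
        qed
        have s: "sem_follows ({Lit l} \<union> S2R) (Lit ` (insert (Pos y) L0))"
        proof (rule sem_lits[OF _ L1c])
          have "z \<notin> A0 \<union> Fall" "v \<notin> A0 \<union> Fall" "y \<notin> A0 \<union> Fall"
            using z v y A1_def by auto
          then have "z \<notin> ivars ({Lit l} \<union> S2R)" "v \<notin> ivars ({Lit l} \<union> S2R)" "y \<notin> ivars ({Lit l} \<union> S2R)"
            using ivS2 by blast+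
          moreover have "\<forall>l\<in>insert (Pos y) L0. var l = z \<or> var l = v \<or> var l = y" using P(5) by auto
          ultimately show "\<forall>l'\<in>insert (Pos y) L0. var l' \<notin> ivars ({Lit l} \<union> S2R)" by metis
        qed
        have "finite (Lit ` (insert (Pos y) L0))" using P(5) finite_subset by auto
        then show ?thesis using t1 t2 d s by blast
      qed
    qed
  qed
qed

end
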